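(* Let $\mathbf{P}=(\Omega,\preccurlyeq_{\mathbf{P}})$ be a poset on a finite set $\Omega$. The following are equivalent: (1) $\mathbf{P}$ is hierarchical; (2) for any $D,B\in\mathcal{I}(\overline{\mathbf{P}})$, $|D|=|B|$ implies $|\min_{\mathbf{P}}(D)|=|\min_{\mathbf{P}}(B)|$; (3) for any $A\subseteq\Omega$ such that $a\preccurlyeq_{\mathbf{P}}b$ for all $a\in A$, $b\in\Omega-A$, it holds that $c\preccurlyeq_{\mathbf{P}}d$ for all $c\in A-\max_{\mathbf{P}}(A)$, $d\in\max_{\mathbf{P}}(A)$; (4) for any $I,J\in\mathcal{I}(\mathbf{P})$, $|I|=|J|$ implies $|\max_{\mathbf{P}}(I)|=|\max_{\mathbf{P}}(J)|$; (5) for any $B\subseteq\Omega$ such that $a\preccurlyeq_{\mathbf{P}}b$ for all $a\in\Omega-B$, $b\in B$, it holds that $c\preccurlyeq_{\mathbf{P}}d$ for all $c\in\min_{\mathbf{P}}(B)$, $d\in B-\min_{\mathbf{P}}(B)$.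
   Context: $\mathcal{I}(\mathbf{P})$ is the set of ideals (down-closed subsets) of $\mathbf{P}$; $\overline{\mathbf{P}}$ is the dual poset ($u\preccurlyeq_{\overline{\mathbf{P}}}v\iff v\preccurlyeq_{\mathbf{P}}u$), so $\mathcal{I}(\overline{\mathbf{P}})$ is the set of up-closed subsets of $\mathbf{P}$. $\max_{\mathbf{P}}(B)$, $\min_{\mathbf{P}}(B)$ are the sets of maximal, minimal elements of $B$. $\mathrm{len}(y)$ is the largest cardinality of a chain in $\mathbf{P}$ with greatest element $y$; $\mathbf{P}$ is hierarchical if for all $u,v$ with $\mathrm{len}(u)+1\leqslant\mathrm{len}(v)$ we have $u\preccurlyeq_{\mathbf{P}}v$. *)

theory Defs
  imports Main
begin

definition poset_on :: "'a set \<Rightarrow> ('a \<Rightarrow> 'a \<Rightarrow> bool) \<Rightarrow> bool" where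
  "poset_on \<Omega> le \<longleftrightarrow>
     (\<forall>x\<in>\<Omega>. le x x) \<and>
     (\<forall>x\<in>\<Omega>. \<forall>y\<in>\<Omega>. le x y \<and> le y x \<longrightarrow> x = y) \<and>
     (\<forall>x\<in>\<Omega>. \<forall>y\<in>\<Omega>. \<forall>z\<in>\<Omega>. le x y \<and> le y z \<longrightarrow> le x z)"

definition ideals :: "'a set \<Rightarrow> ('a \<Rightarrow> 'a \<Rightarrow> bool) \<Rightarrow> 'a set set" where
  "ideals \<Omega> le = {I. I \<subseteq> \<Omega> \<and> (\<forall>v\<in>I. \<forall>u\<in>\<Omega>. le u v \<longrightarrow> u \<in> I)}"

definition dual_rel :: "('a \<Rightarrow> 'a \<Rightarrow> bool) \<Rightarrow> 'a \<Rightarrow> 'a \<Rightarrow> bool" where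
  "dual_rel le u v = le v u"

definition maxs :: "('a \<Rightarrow> 'a \<Rightarrow> bool) \<Rightarrow> 'a set \<Rightarrow> 'a set" where
  "maxs le B = {b\<in>B. \<forall>c\<in>B. le b c \<longrightarrow> c = b}"

definition mins :: "('a \<Rightarrow> 'a \<Rightarrow> bool) \<Rightarrow> 'a set \<Rightarrow> 'a set" where
  "mins le B = {b\<in>B. \<forall>c\<in>B. le c b \<longrightarrow> c = b}"

definition is_chain :: "'a set \<Rightarrow> ('a \<Rightarrow> 'a \<Rightarrow> bool) \<Rightarrow> 'a set \<Rightarrow> bool" where
  "is_chain \<Omega> le C \<longleftrightarrow> C \<subseteq> \<Omega> \<and> (\<forall>x\<in>C. \<forall>y\<in>C. le x y \<or> le y x)"

definition len :: "'a set \<Rightarrow> ('a \<Rightarrow> 'a \<Rightarrow> bool) \<Rightarrow> 'a \<Rightarrow> nat" where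
  "len \<Omega> le y = Max {card C | C. is_chain \<Omega> le C \<and> y \<in> C \<and> (\<forall>c\<in>C. le c y)}"

definition hierarchical :: "'a set \<Rightarrow> ('a \<Rightarrow> 'a \<Rightarrow> bool) \<Rightarrow> bool" where
  "hierarchical \<Omega> le \<longleftrightarrow>
     (\<forall>u\<in>\<Omega>. \<forall>v\<in>\<Omega>. len \<Omega> le u + 1 \<le> len \<Omega> le v \<longrightarrow> le u v)"

end

theory Submission
  imports Defs
begin

definition WO :: "'a set \<Rightarrow> ('a \<Rightarrow> 'a \<Rightarrow> bool) \<Rightarrow> bool" where
  "WO \<Omega> le \<longleftrightarrow> (\<forall>x\<in>\<Omega>. \<forall>y\<in>\<Omega>. \<forall>z\<in>\<Omega>. le x y \<and> x \<noteq> y \<longrightarrow>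
      (le x z \<and> x \<noteq> z) \<or> (le z y \<and> z \<noteq> y))"

definition P3 :: "'a set \<Rightarrow> ('a \<Rightarrow> 'a \<Rightarrow> bool) \<Rightarrow> bool" where
  "P3 \<Omega> le \<longleftrightarrow> (\<forall>A. A \<subseteq> \<Omega> \<longrightarrow> (\<forall>a\<in>A. \<forall>b\<in>\<Omega> - A. le a b) \<longrightarrow>
                  (\<forall>c\<in>A - maxs le A. \<forall>d\<in>maxs le A. le c d))"

definition P4 :: "'a set \<Rightarrow> ('a \<Rightarrow> 'a \<Rightarrow> bool) \<Rightarrow> bool" where
  "P4 \<Omega> le \<longleftrightarrow> (\<forall>I\<in>ideals \<Omega> le. \<forall>J\<in>ideals \<Omega> le.
                  card I = card J \<longrightarrow> card (maxs le I) = card (maxs le J))"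

definition P5 :: "'a set \<Rightarrow> ('a \<Rightarrow> 'a \<Rightarrow> bool) \<Rightarrow> bool" where
  "P5 \<Omega> le \<longleftrightarrow> (\<forall>B. B \<subseteq> \<Omega> \<longrightarrow> (\<forall>a\<in>\<Omega> - B. \<forall>b\<in>B. le a b) \<longrightarrow>
                  (\<forall>c\<in>mins le B. \<forall>d\<in>B - mins le B. le c d))"

lemma poset_dual: "poset_on \<Omega> le \<Longrightarrow> poset_on \<Omega> (dual_rel le)"
  unfolding poset_on_def dual_rel_def by blast

lemma dual_dual: "dual_rel (dual_rel le) = le"
  unfolding dual_rel_def by (intro ext) simp

lemma WO_dual: "WO \<Omega> (dual_rel le) = WO \<Omega> le"
  unfolding WO_def dual_rel_def by blast

lemma maxs_dual: "maxs (dual_rel le) = mins le"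
  unfolding maxs_def mins_def dual_rel_def by (intro ext) simp

lemma mins_dual: "mins (dual_rel le) = maxs le"
  unfolding maxs_def mins_def dual_rel_def by (intro ext) simp

lemma P3_dual: "P3 \<Omega> (dual_rel le) = P5 \<Omega> le"
  unfolding P3_def P5_def maxs_dual unfolding dual_rel_def by blast

lemma P5_dual: "P5 \<Omega> (dual_rel le) = P3 \<Omega> le"
  unfolding P3_def P5_def mins_dual unfolding dual_rel_def by blast

lemma maxs_ne:
  assumes po: "poset_on \<Omega> le" and sub: "S \<subseteq> \<Omega>" and fin: "finite S" and ne: "S \<noteq> {}"
  shows "maxs le S \<noteq> {}"
proof -
  from ne obtain s where "s \<in> S" by blast
  then obtain x where x: "x \<in> S" "\<forall>y. y \<in> S \<longrightarrow> card {w\<in>S. le x w} \<le> card {w\<in>S. le y w}"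
    using ex_has_least_nat[of "\<lambda>x. x \<in> S" s "\<lambda>x. card {w\<in>S. le x w}"] by blast
  have "\<forall>c\<in>S. le x c \<longrightarrow> c = x"
  proof (intro ballI impI)
    fix c assume c: "c \<in> S" "le x c"
    show "c = x"
    proof (rule ccontr)
      assume cx: "c \<noteq> x"
      have "{w\<in>S. le c w} \<subseteq> {w\<in>S. le x w}"
        using po sub c x(1) unfolding poset_on_def by blast
      moreover have "x \<notin> {w\<in>S. le c w}"
        using po sub c x(1) cx unfolding poset_on_def by blast
      moreover have "x \<in> {w\<in>S. le x w}"
        using po sub x(1) unfolding poset_on_def by blast
      ultimately have "{w\<in>S. le c w} \<subset> {w\<in>S. le x w}" by blast
      hence "card {w\<in>S. le c w} < card {w\<in>S. le x w}"
        using fin by (intro psubset_card_mono) auto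
      with x(2) c(1) show False by force
    qed
  qed
  hence "x \<in> maxs le S" using x(1) by (simp add: maxs_def)
  thus ?thesis by blast
qed

lemma mins_ne:
  assumes po: "poset_on \<Omega> le" and sub: "S \<subseteq> \<Omega>" and fin: "finite S" and ne: "S \<noteq> {}"
  shows "mins le S \<noteq> {}"
  using maxs_ne[OF poset_dual[OF po] sub fin ne] by (simp add: maxs_dual)

lemma len_facts:
  assumes fin: "finite \<Omega>" and po: "poset_on \<Omega> le" and y: "y \<in> \<Omega>"
  shows "\<And>C. is_chain \<Omega> le C \<Longrightarrow> y \<in> C \<Longrightarrow> (\<forall>c\<in>C. le c y) \<Longrightarrow> card C \<le> len \<Omega> le y"
    and "\<exists>C. is_chain \<Omega> le C \<and> y \<in> C \<and> (\<forall>c\<in>C. le c y) \<and> card C = len \<Omega> le y"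
proof -
  let ?S = "{card C | C. is_chain \<Omega> le C \<and> y \<in> C \<and> (\<forall>c\<in>C. le c y)}"
  have "?S \<subseteq> card ` Pow \<Omega>" unfolding is_chain_def by blast
  hence finS: "finite ?S" using fin by (meson finite_Pow_iff finite_imageI finite_subset)
  have "is_chain \<Omega> le {y}" using y po unfolding is_chain_def poset_on_def by auto
  hence neS: "?S \<noteq> {}" using y po unfolding poset_on_def by auto
  show "\<And>C. is_chain \<Omega> le C \<Longrightarrow> y \<in> C \<Longrightarrow> (\<forall>c\<in>C. le c y) \<Longrightarrow> card C \<le> len \<Omega> le y"
    unfolding len_def using finS by (intro Max_ge) auto
  have "len \<Omega> le y \<in> ?S" unfolding len_def using finS neS by (rule Max_in)
  thus "\<exists>C. is_chain \<Omega> le C \<and> y \<in> C \<and> (\<forall>c\<in>C. le c y) \<and> card C = len \<Omega> le y" by auto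
qed

lemma len_strict:
  assumes fin: "finite \<Omega>" and po: "poset_on \<Omega> le" and x: "x \<in> \<Omega>" and y: "y \<in> \<Omega>"
    and xy: "le x y" "x \<noteq> y"
  shows "len \<Omega> le x < len \<Omega> le y"
proof -
  obtain C where C: "is_chain \<Omega> le C" "x \<in> C" "\<forall>c\<in>C. le c x" "card C = len \<Omega> le x"
    using len_facts(2)[OF fin po x] by blast
  have CO: "C \<subseteq> \<Omega>" using C(1) unfolding is_chain_def by blast
  have le_y: "\<forall>c\<in>insert y C. le c y"
    using C(3) CO po x y xy unfolding poset_on_def by blast
  have ch: "is_chain \<Omega> le (insert y C)"
    using C(1) le_y y unfolding is_chain_def by blast
  have yC: "y \<notin> C" using C(3) po x y xy unfolding poset_on_def by blast
  have "card (insert y C) = card C + 1" using yC CO fin by (simp add: finite_subset)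
  moreover have "card (insert y C) \<le> len \<Omega> le y"
    using len_facts(1)[OF fin po y ch] le_y by blast
  ultimately show ?thesis using C(4) by simp
qed

lemma len_incomp:
  assumes fin: "finite \<Omega>" and po: "poset_on \<Omega> le" and wo: "WO \<Omega> le"
    and u: "u \<in> \<Omega>" and v: "v \<in> \<Omega>" and nuv: "\<not> le u v" and nvu: "\<not> le v u"
  shows "len \<Omega> le u \<le> len \<Omega> le v"
proof -
  obtain C where C: "is_chain \<Omega> le C" "u \<in> C" "\<forall>c\<in>C. le c u" "card C = len \<Omega> le u"
    using len_facts(2)[OF fin po u] by blast
  have CO: "C \<subseteq> \<Omega>" using C(1) unfolding is_chain_def by blast
  have below: "\<forall>c\<in>C - {u}. le c v"
  proof
    fix c assume c: "c \<in> C - {u}"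
    hence "le c u" "c \<noteq> u" "c \<in> \<Omega>" using C(3) CO by auto
    thus "le c v" using wo u v nvu unfolding WO_def by blast
  qed
  let ?D = "insert v (C - {u})"
  have le_v: "\<forall>c\<in>?D. le c v" using below po v unfolding poset_on_def by blast
  have ch: "is_chain \<Omega> le ?D" using C(1) le_v v unfolding is_chain_def by blast
  have vC: "v \<notin> C" using C(3) nvu by blast
  have "card ?D = card C" using vC CO fin C(2)
    by (simp add: finite_subset) (metis One_nat_def Suc_pred card_gt_0_iff empty_iff finite_subset)
  moreover have "card ?D \<le> len \<Omega> le v"
    using len_facts(1)[OF fin po v ch] le_v by blast
  ultimately show ?thesis using C(4) by simp
qed

lemma C1_WO:
  assumes fin: "finite \<Omega>" and po: "poset_on \<Omega> le"
  shows "hierarchical \<Omega> le \<longleftrightarrow> WO \<Omega> le"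
proof
  assume h: "hierarchical \<Omega> le"
  show "WO \<Omega> le" unfolding WO_def
  proof (intro ballI impI)
    fix x y z assume xyz: "x \<in> \<Omega>" "y \<in> \<Omega>" "z \<in> \<Omega>" and lt: "le x y \<and> x \<noteq> y"
    have l: "len \<Omega> le x < len \<Omega> le y" using len_strict[OF fin po xyz(1,2)] lt by blast
    show "(le x z \<and> x \<noteq> z) \<or> (le z y \<and> z \<noteq> y)"
    proof (cases "len \<Omega> le x + 1 \<le> len \<Omega> le z")
      case True
      hence "le x z" using h xyz unfolding hierarchical_def by blast
      moreover have "x \<noteq> z" using True by auto
      ultimately show ?thesis by blast
    next
      case False
      hence "len \<Omega> le z + 1 \<le> len \<Omega> le y" using l by simp
      hence "le z y" "z \<noteq> y" using h xyz unfolding hierarchical_def by auto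
      thus ?thesis by blast
    qed
  qed
next
  assume wo: "WO \<Omega> le"
  show "hierarchical \<Omega> le" unfolding hierarchical_def
  proof (intro ballI impI)
    fix u v assume uv: "u \<in> \<Omega>" "v \<in> \<Omega>" and l: "len \<Omega> le u + 1 \<le> len \<Omega> le v"
    show "le u v"
    proof (rule ccontr)
      assume n1: "\<not> le u v"
      show False
      proof (cases "le v u")
        case True
        hence "v \<noteq> u" using l by auto
        thus False using len_strict[OF fin po uv(2,1) True] l by simp
      next
        case False
        thus False using len_incomp[OF fin po wo uv(2,1) False n1] l by simp
      qed
    qed
  qed
qed

lemma WO_P3:
  assumes wo: "WO \<Omega> le"
  shows "P3 \<Omega> le"
  unfolding P3_def
proof (intro allI impI ballI)
  fix A c d assume A: "A \<subseteq> \<Omega>" and c: "c \<in> A - maxs le A" and d: "d \<in> maxs le A"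
  obtain c' where c': "c' \<in> A" "le c c'" "c' \<noteq> c" using c unfolding maxs_def by blast
  have "d \<in> A" using d unfolding maxs_def by blast
  hence "(le c d \<and> c \<noteq> d) \<or> (le d c' \<and> d \<noteq> c')"
    using wo A c c' unfolding WO_def by blast
  thus "le c d" using d c'(1) unfolding maxs_def by blast
qed

lemma P3_WO:
  assumes fin: "finite \<Omega>" and po: "poset_on \<Omega> le" and p3: "P3 \<Omega> le"
  shows "WO \<Omega> le"
proof -
  define A where "A = (\<lambda>n. ((\<lambda>S. S - maxs le S) ^^ n) \<Omega>)"
  have A0: "A 0 = \<Omega>" and AS: "\<And>n. A (Suc n) = A n - maxs le (A n)" by (simp_all add: A_def)
  have Asub: "\<And>n. A n \<subseteq> \<Omega>"
  proof -
    fix n show "A n \<subseteq> \<Omega>" by (induction n) (auto simp: A0 AS)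
  qed
  have Amono: "\<And>i j. i \<le> j \<Longrightarrow> A j \<subseteq> A i"
  proof -
    fix i j :: nat assume "i \<le> j"
    thus "A j \<subseteq> A i" by (induction rule: dec_induct) (auto simp: AS)
  qed
  have Ahyp: "\<And>n. \<forall>a\<in>A n. \<forall>b\<in>\<Omega> - A n. le a b"
  proof -
    fix n show "\<forall>a\<in>A n. \<forall>b\<in>\<Omega> - A n. le a b"
    proof (induction n)
      case 0 thus ?case by (simp add: A0)
    next
      case (Suc n)
      show ?case
      proof (intro ballI)
        fix a b assume a: "a \<in> A (Suc n)" and b: "b \<in> \<Omega> - A (Suc n)"
        show "le a b"
        proof (cases "b \<in> A n")
          case True
          hence "b \<in> maxs le (A n)" using b AS by auto
          moreover have "a \<in> A n - maxs le (A n)" using a AS by auto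
          ultimately show ?thesis using p3 Asub Suc.IH unfolding P3_def by blast
        next
          case False
          thus ?thesis using Suc.IH a b AS by auto
        qed
      qed
    qed
  qed
  have cardA: "\<And>n. A n = {} \<or> card (A n) + n \<le> card \<Omega>"
  proof -
    fix n show "A n = {} \<or> card (A n) + n \<le> card \<Omega>"
    proof (induction n)
      case 0 thus ?case by (simp add: A0)
    next
      case (Suc n)
      show ?case
      proof (cases "A (Suc n) = {}")
        case True thus ?thesis by simp
      next
        case False
        hence ne: "A n \<noteq> {}" using Amono[of n "Suc n"] by auto
        have finA: "finite (A n)" using Asub fin finite_subset by blast
        have "maxs le (A n) \<noteq> {}" using maxs_ne[OF po Asub finA ne] .
        moreover have "maxs le (A n) \<subseteq> A n" unfolding maxs_def by blast
        ultimately have "A (Suc n) \<subset> A n" using AS by blast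
        hence "card (A (Suc n)) < card (A n)" using finA psubset_card_mono by blast
        thus ?thesis using Suc.IH ne by simp
      qed
    qed
  qed
  have lev: "\<And>w. w \<in> \<Omega> \<Longrightarrow> \<exists>i. w \<in> maxs le (A i)"
  proof -
    fix w assume w: "w \<in> \<Omega>"
    have "w \<notin> A (Suc (card \<Omega>))" using cardA[of "Suc (card \<Omega>)"] by auto
    then obtain n where n: "w \<notin> A n" "\<forall>m. w \<notin> A m \<longrightarrow> n \<le> m"
      using ex_has_least_nat[of "\<lambda>n. w \<notin> A n" _ "\<lambda>n. n"] by blast
    have "n \<noteq> 0" using n(1) w A0 by (metis)
    then obtain i where i: "n = Suc i" by (cases n) auto
    have "w \<in> A i" using n(2) i by (metis Suc_n_not_le_n)
    thus "\<exists>i. w \<in> maxs le (A i)" using n(1) i AS by blast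
  qed
  have cross: "\<And>u v i j. u \<in> maxs le (A i) \<Longrightarrow> v \<in> maxs le (A j) \<Longrightarrow> i < j \<Longrightarrow> le v u \<and> v \<noteq> u"
  proof -
    fix u v i j assume u: "u \<in> maxs le (A i)" and v: "v \<in> maxs le (A j)" and ij: "i < j"
    have "v \<in> A (Suc i)" using v Amono[of "Suc i" j] ij unfolding maxs_def by auto
    moreover have "u \<in> \<Omega> - A (Suc i)" using u Asub AS unfolding maxs_def by auto
    ultimately show "le v u \<and> v \<noteq> u" using Ahyp[of "Suc i"] by auto
  qed
  have same: "\<And>u v i. u \<in> maxs le (A i) \<Longrightarrow> v \<in> maxs le (A i) \<Longrightarrow> le u v \<Longrightarrow> u = v"
    unfolding maxs_def by blast
  show ?thesis unfolding WO_def
  proof (intro ballI impI)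
    fix x y z assume xyz: "x \<in> \<Omega>" "y \<in> \<Omega>" "z \<in> \<Omega>" and lt: "le x y \<and> x \<noteq> y"
    obtain i where i: "x \<in> maxs le (A i)" using lev xyz by blast
    obtain j where j: "y \<in> maxs le (A j)" using lev xyz by blast
    obtain k where k: "z \<in> maxs le (A k)" using lev xyz by blast
    have "i \<noteq> j" using same i j lt by blast
    moreover have "\<not> i < j"
    proof
      assume "i < j"
      hence "le y x" "y \<noteq> x" using cross[OF i j] by auto
      thus False using lt po xyz unfolding poset_on_def by blast
    qed
    ultimately have ji: "j < i" by simp
    show "(le x z \<and> x \<noteq> z) \<or> (le z y \<and> z \<noteq> y)"
    proof (cases "k < i")
      case True thus ?thesis using cross[OF k i] by blast
    next
      case False
      hence "j < k" using ji by simp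
      thus ?thesis using cross[OF j k] by blast
    qed
  qed
qed

lemma WO_P4:
  assumes fin: "finite \<Omega>" and po: "poset_on \<Omega> le" and wo: "WO \<Omega> le"
  shows "P4 \<Omega> le"
proof -
  define D where "D = (\<lambda>m. {y\<in>\<Omega>. le y m \<and> y \<noteq> m})"
  have key1: "\<And>I m. I \<in> ideals \<Omega> le \<Longrightarrow> m \<in> maxs le I \<Longrightarrow>
      card I = card (maxs le I) + card (D m)"
  proof -
    fix I m assume I: "I \<in> ideals \<Omega> le" and m: "m \<in> maxs le I"
    have IO: "I \<subseteq> \<Omega>" using I unfolding ideals_def by blast
    have mI: "m \<in> I" using m unfolding maxs_def by blast
    have eq: "I = maxs le I \<union> D m"
    proof
      show "I \<subseteq> maxs le I \<union> D m"
      proof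
        fix x assume x: "x \<in> I"
        show "x \<in> maxs le I \<union> D m"
        proof (cases "x \<in> maxs le I")
          case False
          then obtain c where c: "c \<in> I" "le x c" "c \<noteq> x" using x unfolding maxs_def by blast
          have "(le x m \<and> x \<noteq> m) \<or> (le m c \<and> m \<noteq> c)"
            using wo IO x c mI unfolding WO_def by blast
          hence "le x m \<and> x \<noteq> m" using m c(1) unfolding maxs_def by blast
          thus ?thesis using IO x unfolding D_def by blast
        qed simp
      qed
      show "maxs le I \<union> D m \<subseteq> I"
        using I mI unfolding maxs_def D_def ideals_def by blast
    qed
    have disj: "maxs le I \<inter> D m = {}" using m unfolding maxs_def D_def by blast
    have "finite (maxs le I)" "finite (D m)"
      using IO fin unfolding maxs_def D_def by (auto intro: finite_subset)
    thus "card I = card (maxs le I) + card (D m)"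
      using eq disj by (metis card_Un_disjoint)
  qed
  have key2: "\<And>I J m n. I \<in> ideals \<Omega> le \<Longrightarrow> J \<in> ideals \<Omega> le \<Longrightarrow> m \<in> maxs le I \<Longrightarrow>
      n \<in> maxs le J \<Longrightarrow> le m n \<Longrightarrow> m \<noteq> n \<Longrightarrow> card I < card J"
  proof -
    fix I J m n assume I: "I \<in> ideals \<Omega> le" and J: "J \<in> ideals \<Omega> le" and m: "m \<in> maxs le I"
      and n: "n \<in> maxs le J" and mn: "le m n" "m \<noteq> n"
    have IO: "I \<subseteq> \<Omega>" and JO: "J \<subseteq> \<Omega>" using I J unfolding ideals_def by blast+
    have mI: "m \<in> I" and nJ: "n \<in> J" using m n unfolding maxs_def by blast+
    have "I \<subseteq> D n"
    proof
      fix x assume x: "x \<in> I"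
      have "(le m x \<and> m \<noteq> x) \<or> (le x n \<and> x \<noteq> n)"
        using wo IO JO x mI nJ mn unfolding WO_def by blast
      thus "x \<in> D n" using m x IO unfolding maxs_def D_def by blast
    qed
    moreover have "D n \<subset> J" using J nJ unfolding D_def ideals_def by blast
    ultimately show "card I < card J"
      using JO fin by (meson card_mono finite_subset le_less_trans psubset_card_mono)
  qed
  have key3: "\<And>m n. m \<in> \<Omega> \<Longrightarrow> n \<in> \<Omega> \<Longrightarrow> \<not> (le m n \<and> m \<noteq> n) \<Longrightarrow>
      \<not> (le n m \<and> n \<noteq> m) \<Longrightarrow> D m = D n"
  proof -
    fix m n assume mn: "m \<in> \<Omega>" "n \<in> \<Omega>" "\<not> (le m n \<and> m \<noteq> n)" "\<not> (le n m \<and> n \<noteq> m)"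
    show "D m = D n"
    proof (cases "m = n")
      case False
      thus ?thesis using mn wo unfolding D_def WO_def by blast
    qed simp
  qed
  show ?thesis unfolding P4_def
  proof (intro ballI impI)
    fix I J assume I: "I \<in> ideals \<Omega> le" and J: "J \<in> ideals \<Omega> le" and c: "card I = card J"
    have IO: "I \<subseteq> \<Omega>" and JO: "J \<subseteq> \<Omega>" using I J unfolding ideals_def by blast+
    have fI: "finite I" and fJ: "finite J" using IO JO fin finite_subset by blast+
    show "card (maxs le I) = card (maxs le J)"
    proof (cases "I = {}")
      case True
      hence "J = {}" using c fJ by simp
      thus ?thesis using True unfolding maxs_def by simp
    next
      case False
      hence "J \<noteq> {}" using c fI by auto
      then obtain n where n: "n \<in> maxs le J" using maxs_ne[OF po JO fJ] by blast
      obtain m where m: "m \<in> maxs le I" using maxs_ne[OF po IO fI False] by blast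
      have mO: "m \<in> \<Omega>" and nO: "n \<in> \<Omega>" using m n IO JO unfolding maxs_def by blast+
      have "\<not> (le m n \<and> m \<noteq> n)" using key2[OF I J m n] c by auto
      moreover have "\<not> (le n m \<and> n \<noteq> m)" using key2[OF J I n m] c by auto
      ultimately have "D m = D n" using key3 mO nO by blast
      thus ?thesis using key1[OF I m] key1[OF J n] c by simp
    qed
  qed
qed

lemma P4_P5:
  assumes fin: "finite \<Omega>" and po: "poset_on \<Omega> le" and p4: "P4 \<Omega> le"
  shows "P5 \<Omega> le"
  unfolding P5_def
proof (intro allI impI ballI)
  fix B c d0 assume B: "B \<subseteq> \<Omega>" and H: "\<forall>a\<in>\<Omega> - B. \<forall>b\<in>B. le a b"
    and c: "c \<in> mins le B" and d0: "d0 \<in> B - mins le B"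
  show "le c d0"
  proof (rule ccontr)
    assume nc: "\<not> le c d0"
    define X where "X = {d\<in>B - mins le B. \<not> le c d}"
    have XO: "X \<subseteq> \<Omega>" using B unfolding X_def by blast
    have fX: "finite X" using XO fin finite_subset by blast
    have "X \<noteq> {}" using d0 nc unfolding X_def by blast
    then obtain d where d: "d \<in> mins le X" using mins_ne[OF po XO fX] by blast
    have dB: "d \<in> B" "d \<notin> mins le B" "\<not> le c d" using d unfolding mins_def X_def by blast+
    have cB: "c \<in> B" using c unfolding mins_def by blast
    have trans: "\<forall>x\<in>\<Omega>. \<forall>y\<in>\<Omega>. \<forall>z\<in>\<Omega>. le x y \<and> le y z \<longrightarrow> le x z"
      and antisym: "\<forall>x\<in>\<Omega>. \<forall>y\<in>\<Omega>. le x y \<and> le y x \<longrightarrow> x = y"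
      and refl: "\<forall>x\<in>\<Omega>. le x x"
      using po unfolding poset_on_def by blast+
    have below: "\<And>e. e \<in> B \<Longrightarrow> le e d \<Longrightarrow> e \<noteq> d \<Longrightarrow> e \<in> mins le B \<and> e \<noteq> c"
    proof -
      fix e assume e: "e \<in> B" "le e d" "e \<noteq> d"
      have "e \<in> mins le B"
      proof (rule ccontr)
        assume en: "e \<notin> mins le B"
        show False
        proof (cases "le c e")
          case True
          hence "le c d" using trans e B cB dB by blast
          thus False using dB by blast
        next
          case False
          hence "e \<in> X" using e en unfolding X_def by blast
          thus False using d e unfolding mins_def by blast
        qed
      qed
      moreover have "e \<noteq> c" using e dB by blast
      ultimately show "e \<in> mins le B \<and> e \<noteq> c" by blast
    qed
    obtain w where w: "w \<in> B" "le w d" "w \<noteq> d" using dB unfolding mins_def by blast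
    have wm: "w \<in> mins le B" "w \<noteq> c" using below[OF w] by blast+
    define L where "L = \<Omega> - B"
    define I where "I = L \<union> mins le B"
    define J where "J = insert d (L \<union> (mins le B - {c}))"
    have mB: "mins le B \<subseteq> B" unfolding mins_def by blast
    have notL: "\<And>u v. u \<in> B \<Longrightarrow> v \<in> L \<Longrightarrow> le u v \<Longrightarrow> False"
      using H antisym B unfolding L_def by blast
    have Iid: "I \<in> ideals \<Omega> le"
      unfolding ideals_def
    proof (intro CollectI conjI ballI impI)
      show "I \<subseteq> \<Omega>" using B mB unfolding I_def L_def by blast
      fix v u assume v: "v \<in> I" and u: "u \<in> \<Omega>" and uv: "le u v"
      show "u \<in> I"
      proof (cases "u \<in> B")
        case True
        have "v \<notin> L" using notL True uv by blast
        hence "v \<in> mins le B" using v unfolding I_def by blast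
        hence "u = v" using True uv unfolding mins_def by blast
        thus ?thesis using v by simp
      next
        case False thus ?thesis using u unfolding I_def L_def by blast
      qed
    qed
    have Jid: "J \<in> ideals \<Omega> le"
      unfolding ideals_def
    proof (intro CollectI conjI ballI impI)
      show "J \<subseteq> \<Omega>" using B mB dB unfolding J_def L_def by blast
      fix v u assume v: "v \<in> J" and u: "u \<in> \<Omega>" and uv: "le u v"
      show "u \<in> J"
      proof (cases "u \<in> B")
        case True
        have "v \<notin> L" using notL True uv by blast
        hence "v = d \<or> v \<in> mins le B - {c}" using v unfolding J_def by blast
        thus ?thesis
        proof
          assume "v = d"
          thus ?thesis using below[OF True] uv unfolding J_def by blast
        next
          assume "v \<in> mins le B - {c}"
          hence "u = v" using True uv unfolding mins_def by blast
          thus ?thesis using v by simp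
        qed
      next
        case False thus ?thesis using u unfolding J_def L_def by blast
      qed
    qed
    have fL: "finite L" and fM: "finite (mins le B)"
      using fin B mB unfolding L_def by (auto intro: finite_subset)
    have LM: "L \<inter> mins le B = {}" using mB unfolding L_def by blast
    have cI: "card I = card L + card (mins le B)"
      unfolding I_def using fL fM LM by (simp add: card_Un_disjoint)
    have dnot: "d \<notin> L \<union> (mins le B - {c})" using dB unfolding L_def by blast
    have "card J = Suc (card (L \<union> (mins le B - {c})))"
      unfolding J_def using dnot fL fM by simp
    also have "\<dots> = Suc (card L + card (mins le B - {c}))"
      using fL fM LM by (subst card_Un_disjoint) auto
    also have "\<dots> = card L + card (mins le B)"
      using c fM by (simp add: card_Diff_singleton) (metis Suc_pred card_gt_0_iff empty_iff)
    finally have cJ: "card J = card I" using cI by simp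
    have maxI: "maxs le I = mins le B"
    proof
      show "maxs le I \<subseteq> mins le B"
      proof
        fix x assume x: "x \<in> maxs le I"
        show "x \<in> mins le B"
        proof (rule ccontr)
          assume "x \<notin> mins le B"
          hence xL: "x \<in> L" using x unfolding maxs_def I_def by blast
          have "le x c" using H xL cB unfolding L_def by blast
          moreover have "c \<in> I" using c unfolding I_def by blast
          ultimately have "c = x" using x unfolding maxs_def by blast
          thus False using xL cB unfolding L_def by blast
        qed
      qed
      show "mins le B \<subseteq> maxs le I"
      proof
        fix m assume m: "m \<in> mins le B"
        have "\<forall>e\<in>I. le m e \<longrightarrow> e = m"
        proof (intro ballI impI)
          fix e assume e: "e \<in> I" "le m e"
          show "e = m"
          proof (cases "e \<in> L")
            case True
            hence "le e m" using H m mB unfolding L_def by blast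
            thus ?thesis using antisym e True m mB B unfolding L_def by blast
          next
            case False
            hence "e \<in> mins le B" using e unfolding I_def by blast
            thus ?thesis using e m unfolding mins_def by blast
          qed
        qed
        thus "m \<in> maxs le I" using m unfolding maxs_def I_def by blast
      qed
    qed
    have maxJ: "maxs le J \<subseteq> insert d (mins le B - {c} - {w})"
    proof
      fix x assume x: "x \<in> maxs le J"
      have dJ: "d \<in> J" unfolding J_def by blast
      have "x \<notin> L"
      proof
        assume xL: "x \<in> L"
        hence "le x d" using H dB unfolding L_def by blast
        hence "d = x" using x dJ unfolding maxs_def by blast
        thus False using xL dB unfolding L_def by blast
      qed
      moreover have "x \<noteq> w"
      proof
        assume "x = w"
        hence "d = x" using x dJ w unfolding maxs_def by blast
        thus False using \<open>x = w\<close> w by blast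
      qed
      ultimately show "x \<in> insert d (mins le B - {c} - {w})"
        using x unfolding maxs_def J_def by blast
    qed
    have "card (maxs le J) \<le> card (insert d (mins le B - {c} - {w}))"
      using maxJ fM by (intro card_mono) auto
    also have "\<dots> \<le> Suc (card (mins le B - {c} - {w}))"
      by (simp add: card_insert_le_m1)
    also have "\<dots> = Suc (card (mins le B) - 2)"
      using c wm fM by (simp add: card_Diff_singleton)
    also have "\<dots> < card (mins le B)"
    proof -
      have "{c, w} \<subseteq> mins le B" using c wm by blast
      hence "card {c, w} \<le> card (mins le B)" using fM by (rule card_mono[rotated])
      hence "2 \<le> card (mins le B)" using wm by simp
      thus ?thesis by simp
    qed
    finally have "card (maxs le J) < card (maxs le I)" using maxI by simp
    moreover have "card (maxs le I) = card (maxs le J)"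
      using p4 Iid Jid cJ unfolding P4_def by (metis)
    ultimately show False by simp
  qed
qed

theorem lemma2p6:
  fixes \<Omega> :: "'a set" and le :: "'a \<Rightarrow> 'a \<Rightarrow> bool"
  assumes fin: "finite \<Omega>" and po: "poset_on \<Omega> le"
  defines "C1 \<equiv> hierarchical \<Omega> le"
      and "C2 \<equiv> (\<forall>D\<in>ideals \<Omega> (dual_rel le). \<forall>B\<in>ideals \<Omega> (dual_rel le).
                  card D = card B \<longrightarrow> card (mins le D) = card (mins le B))"
      and "C3 \<equiv> (\<forall>A. A \<subseteq> \<Omega> \<longrightarrow> (\<forall>a\<in>A. \<forall>b\<in>\<Omega> - A. le a b) \<longrightarrow>
                  (\<forall>c\<in>A - maxs le A. \<forall>d\<in>maxs le A. le c d))"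
      and "C4 \<equiv> (\<forall>I\<in>ideals \<Omega> le. \<forall>J\<in>ideals \<Omega> le.
                  card I = card J \<longrightarrow> card (maxs le I) = card (maxs le J))"
      and "C5 \<equiv> (\<forall>B. B \<subseteq> \<Omega> \<longrightarrow> (\<forall>a\<in>\<Omega> - B. \<forall>b\<in>B. le a b) \<longrightarrow>
                  (\<forall>c\<in>mins le B. \<forall>d\<in>B - mins le B. le c d))"
  shows "(C1 \<longleftrightarrow> C2) \<and> (C1 \<longleftrightarrow> C3) \<and> (C1 \<longleftrightarrow> C4) \<and> (C1 \<longleftrightarrow> C5)"
proof -
  have podual: "poset_on \<Omega> (dual_rel le)" using poset_dual[OF po] .
  have e1: "C1 = WO \<Omega> le" unfolding C1_def using C1_WO[OF fin po] .
  have e3: "C3 = P3 \<Omega> le" unfolding C3_def P3_def ..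
  have e4: "C4 = P4 \<Omega> le" unfolding C4_def P4_def ..
  have e5: "C5 = P5 \<Omega> le" unfolding C5_def P5_def ..
  have e2: "C2 = P4 \<Omega> (dual_rel le)" unfolding C2_def P4_def maxs_dual ..
  have w3: "WO \<Omega> le = P3 \<Omega> le" using WO_P3 P3_WO[OF fin po] by blast
  have w5: "WO \<Omega> le = P5 \<Omega> le"
    using WO_P3[of \<Omega> "dual_rel le"] P3_WO[OF fin podual] WO_dual[of \<Omega> le] P3_dual[of \<Omega> le]
    by blast
  have w4: "WO \<Omega> le = P4 \<Omega> le"
    using WO_P4[OF fin po] P4_P5[OF fin po] w5 by blast
  have w2: "WO \<Omega> le = P4 \<Omega> (dual_rel le)"
    using WO_P4[OF fin podual] P4_P5[OF fin podual] P5_dual[of \<Omega> le] w3 WO_dual[of \<Omega> le]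
    by blast
  show ?thesis using e1 e2 e3 e4 e5 w2 w3 w4 w5 by blast
qed

end
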